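(* Let $H_B=(V_B,E_B)$ be a 3-uniform hypergraph, let $\varepsilon=1/|V_B|^{100}$, and let $\{\mathbf v_a\}_{a\in V_B\cup\{\emptyset\}}\subset\mathbb R^{|V_B|}$ be a feasible solution of the SDP below with respect to which every vertex is $\varepsilon$-balanced. Let $t\in\mathbb R$, let $g\sim N(0,1)^{|V_B|}$ be a standard Gaussian vector, and let $S(t)=\{a\in V_B:\langle\bar{\mathbf u}_a,g\rangle\ge t\}$. Then for any two vertices $a,b$ that lie in a common edge of $H_B$, $$\Pr[a\in S(t)\wedge b\in S(t)]\le \bar\Phi(2t)+\frac{2}{|V_B|^{25}}.$$
   Context: SDP: unit vectors $\mathbf v_a$ for $a\in V_B\cup\{\emptyset\}$ with $\mathbf v_a+\mathbf v_b+\mathbf v_c=-\mathbf v_\emptyset$ for every edge $\{a,b,c\}$. $\gamma_a=\langle\mathbf v_a,\mathbf v_\emptyset\rangle$; vertex $a$ is $\varepsilon$-balanced if $\gamma_a\in[-1/3-\varepsilon,-1/3+\varepsilon]$; $\bar{\mathbf u}_a=\frac{\mathbf v_a-\gamma_a\mathbf v_\emptyset}{\sqrt{1-\gamma_a^2}}$. $\bar\Phi(t)=\Pr_{x\sim N(0,1)}[x\ge t]$. *)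

theory Defs
  imports "HOL-Probability.Probability"
begin

text \<open>Vertices of H_B are the elements of a finite type 'v; V_B = UNIV, so
  R^{|V_B|} is rendered as real^'v. The SDP vector of the special element
  (empty set) is a separate vector v0.\<close>

definition gauss_measure :: "('v::finite \<Rightarrow> real) measure" where
  "gauss_measure = PiM UNIV (\<lambda>_. std_normal_distribution)"

definition Phibar :: "real \<Rightarrow> real" where
  "Phibar t = measure std_normal_distribution {t..}"

definition ip_gauss :: "real^'v::finite \<Rightarrow> ('v \<Rightarrow> real) \<Rightarrow> real" where
  "ip_gauss u g = (\<Sum>i\<in>UNIV. u $ i * g i)"

definition sdp_feasible :: "'v::finite set set \<Rightarrow> ('v \<Rightarrow> real^'v) \<Rightarrow> real^'v \<Rightarrow> bool" where
  "sdp_feasible E v v0 \<longleftrightarrow> norm v0 = 1 \<and> (\<forall>a. norm (v a) = 1) \<and>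
     (\<forall>e\<in>E. (\<Sum>x\<in>e. v x) = - v0)"

definition gam :: "('v \<Rightarrow> real^'w::finite) \<Rightarrow> real^'w \<Rightarrow> 'v \<Rightarrow> real" where
  "gam v v0 a = inner (v a) v0"

definition balanced :: "real \<Rightarrow> ('v \<Rightarrow> real^'w::finite) \<Rightarrow> real^'w \<Rightarrow> 'v \<Rightarrow> bool" where
  "balanced \<epsilon> v v0 a \<longleftrightarrow> -1/3 - \<epsilon> \<le> gam v v0 a \<and> gam v v0 a \<le> -1/3 + \<epsilon>"

definition ubar :: "('v \<Rightarrow> real^'w::finite) \<Rightarrow> real^'w \<Rightarrow> 'v \<Rightarrow> real^'w" where
  "ubar v v0 a = (1 / sqrt (1 - (gam v v0 a)\<^sup>2)) *\<^sub>R (v a - gam v v0 a *\<^sub>R v0)"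

definition Sset :: "('v::finite \<Rightarrow> real^'v) \<Rightarrow> real^'v \<Rightarrow> real \<Rightarrow> ('v \<Rightarrow> real) \<Rightarrow> 'v set" where
  "Sset v v0 t g = {a. ip_gauss (ubar v v0 a) g \<ge> t}"

end

theory Submission
  imports Defs
begin

lemma gauss_prob_space: "prob_space (gauss_measure :: ('v::finite \<Rightarrow> real) measure)"
  unfolding gauss_measure_def by (intro prob_space_PiM prob_space_normal_density) auto

lemma gauss_indep:
  "prob_space.indep_vars (gauss_measure :: ('v::finite \<Rightarrow> real) measure)
     (\<lambda>_. std_normal_distribution) (\<lambda>i g. g i) UNIV"
proof -
  interpret prob_space "gauss_measure :: ('v \<Rightarrow> real) measure" by (rule gauss_prob_space)
  have comp: "distr gauss_measure std_normal_distribution (\<lambda>g. g i) = std_normal_distribution" for i :: 'v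
    unfolding gauss_measure_def by (rule distr_PiM_component) (auto intro: prob_space_normal_density)
  have "distr gauss_measure gauss_measure (\<lambda>x::'v\<Rightarrow>real. \<lambda>i\<in>UNIV. x i) = distr gauss_measure gauss_measure (\<lambda>x. x)"
    by (rule distr_cong) (auto simp: restrict_def)
  also have "\<dots> = gauss_measure" by (rule distr_id)
  finally have 1: "distr gauss_measure gauss_measure (\<lambda>x::'v\<Rightarrow>real. \<lambda>i\<in>UNIV. x i) = gauss_measure" .
  have 2: "Pi\<^sub>M UNIV (\<lambda>i. distr gauss_measure std_normal_distribution (\<lambda>g. g i)) = (gauss_measure :: ('v \<Rightarrow> real) measure)"
  proof -
    have c: "(\<lambda>i. distr gauss_measure std_normal_distribution (\<lambda>g::'v\<Rightarrow>real. g i)) = (\<lambda>i::'v. std_normal_distribution)"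
      by (rule ext) (rule comp)
    show ?thesis unfolding c by (simp add: gauss_measure_def)
  qed
  show ?thesis
    apply (subst indep_vars_iff_distr_eq_PiM)
      apply simp
     apply (simp add: gauss_measure_def)
    apply (subst 2)
    using 1 by (simp add: gauss_measure_def)
qed

lemma gauss_prob:
  fixes c :: "real^'v::finite"
  assumes "c \<noteq> 0"
  shows "measure gauss_measure {g \<in> space gauss_measure. x \<le> ip_gauss c g} = Phibar (x / norm c)"
proof -
  interpret prob_space "gauss_measure :: ('v \<Rightarrow> real) measure" by (rule gauss_prob_space)
  have comp: "distr gauss_measure std_normal_distribution (\<lambda>g. g i) = std_normal_distribution" for i :: 'v
    unfolding gauss_measure_def by (rule distr_PiM_component) (auto intro: prob_space_normal_density)
  have meas: "(\<lambda>g::'v\<Rightarrow>real. g i) \<in> measurable gauss_measure lborel" for i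
    unfolding gauss_measure_def by simp
  have dist1: "distributed gauss_measure lborel (\<lambda>g. g i) std_normal_density" for i :: 'v
  proof -
    have "distr gauss_measure lborel (\<lambda>g. g i) = distr gauss_measure std_normal_distribution (\<lambda>g. g i)"
      by (rule distr_cong) auto
    then show ?thesis unfolding distributed_def using comp meas by simp
  qed
  define I where "I = {i. c $ i \<noteq> 0}"
  have "I \<noteq> {}" using assms unfolding I_def by (auto simp: vec_eq_iff)
  define Y where "Y = (\<lambda>i (g::'v\<Rightarrow>real). c $ i * g i)"
  have distY: "distributed gauss_measure lborel (Y i) (normal_density 0 \<bar>c $ i\<bar>)" if "i \<in> I" for i
  proof -
    have "distributed gauss_measure lborel (\<lambda>g. 0 + c $ i * g i) (normal_density (0 + c $ i * 0) (\<bar>c $ i\<bar> * 1))"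
      by (rule normal_density_affine[OF dist1]) (use that in \<open>auto simp: I_def\<close>)
    then show ?thesis by (simp add: Y_def)
  qed
  have indY: "indep_vars (\<lambda>_. borel) Y I"
  proof -
    have "indep_vars (\<lambda>_. borel) (\<lambda>i. (\<lambda>x. c $ i * x) \<circ> (\<lambda>g. g i)) UNIV"
      by (rule indep_vars_compose[OF gauss_indep]) auto
    then have "indep_vars (\<lambda>_. borel) Y UNIV" by (simp add: Y_def o_def)
    then show ?thesis by (rule indep_vars_subset) auto
  qed
  have sumY: "distributed gauss_measure lborel (\<lambda>g. \<Sum>i\<in>I. Y i g) (normal_density (\<Sum>i\<in>I. 0) (sqrt (\<Sum>i\<in>I. \<bar>c $ i\<bar>\<^sup>2)))"
    by (rule sum_indep_normal[OF _ \<open>I \<noteq> {}\<close> indY _ distY]) (auto simp: I_def)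
  have eqY: "(\<Sum>i\<in>I. Y i g) = ip_gauss c g" for g
    unfolding ip_gauss_def Y_def by (rule sum.mono_neutral_left) (auto simp: I_def)
  have eqN: "sqrt (\<Sum>i\<in>I. \<bar>c $ i\<bar>\<^sup>2) = norm c"
  proof -
    have "(\<Sum>i\<in>I. \<bar>c $ i\<bar>\<^sup>2) = (\<Sum>i\<in>UNIV. (norm (c $ i))\<^sup>2)"
      unfolding real_norm_def by (rule sum.mono_neutral_left) (auto simp: I_def)
    then show ?thesis unfolding norm_vec_def L2_set_def by simp
  qed
  have npos: "norm c > 0" using assms by simp
  have d: "distributed gauss_measure lborel (ip_gauss c) (normal_density 0 (norm c))"
    using sumY unfolding eqY eqN by simp
  have d2: "distributed gauss_measure lborel (\<lambda>g. (ip_gauss c g - 0) / norm c) std_normal_density"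
    using d normal_standard_normal_convert[OF npos] by simp
  let ?Z = "\<lambda>g. (ip_gauss c g - 0) / norm c"
  have "{g \<in> space gauss_measure. x \<le> ip_gauss c g} = ?Z -` {x / norm c..} \<inter> space gauss_measure"
    using npos by (auto simp: divide_le_cancel field_simps)
  also have "measure gauss_measure \<dots> = measure (distr gauss_measure lborel ?Z) {x / norm c..}"
    by (rule measure_distr[symmetric]) (use d2 in \<open>auto simp: distributed_def\<close>)
  also have "\<dots> = Phibar (x / norm c)"
    unfolding Phibar_def using d2 by (simp add: distributed_def)
  finally show ?thesis .
qed

lemma Phibar_mono:
  assumes "x \<le> y" shows "Phibar y \<le> Phibar x"
proof -
  interpret prob_space std_normal_distribution by (rule prob_space_normal_density) simp
  show ?thesis unfolding Phibar_def
    by (rule finite_measure_mono) (use assms in auto)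
qed

lemma Phibar_nonneg: "0 \<le> Phibar x"
  unfolding Phibar_def by simp

lemma Phibar_gap:
  assumes "0 \<le> y" "y \<le> x"
  shows "Phibar y \<le> Phibar x + (x - y) * std_normal_density y"
proof -
  interpret prob_space std_normal_distribution by (rule prob_space_normal_density) simp
  have split: "{y..} = {y..<x} \<union> {x..}" using assms by auto
  have "Phibar y = measure std_normal_distribution {y..<x} + Phibar x"
    unfolding Phibar_def split by (rule finite_measure_Union) auto
  moreover have "measure std_normal_distribution {y..<x} \<le> (x - y) * std_normal_density y"
  proof -
    have "emeasure std_normal_distribution {y..<x} = (\<integral>\<^sup>+z. ennreal (std_normal_density z) * indicator {y..<x} z \<partial>lborel)"
      by (rule emeasure_density) auto
    also have "\<dots> \<le> (\<integral>\<^sup>+z. ennreal (std_normal_density y) * indicator {y..<x} z \<partial>lborel)"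
    proof (rule nn_integral_mono)
      fix z show "ennreal (std_normal_density z) * indicator {y..<x} z \<le> ennreal (std_normal_density y) * indicator {y..<x} z"
      proof (cases "z \<in> {y..<x}")
        case True
        then have "y\<^sup>2 \<le> z\<^sup>2" using assms by (intro power_mono) auto
        then have "std_normal_density z \<le> std_normal_density y"
          unfolding std_normal_density_def by (intro mult_left_mono) auto
        then show ?thesis using True by simp
      qed simp
    qed
    also have "\<dots> = ennreal (std_normal_density y) * emeasure lborel {y..<x}"
      by (rule nn_integral_cmult_indicator) auto
    also have "\<dots> = ennreal ((x - y) * std_normal_density y)"
      using assms by (simp add: ennreal_mult' mult.commute)
    finally have "ennreal (measure std_normal_distribution {y..<x}) \<le> ennreal ((x - y) * std_normal_density y)"
      by (simp add: emeasure_eq_measure)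
    moreover have "0 \<le> (x - y) * std_normal_density y" using assms by simp
    ultimately show ?thesis by (simp add: ennreal_le_iff)
  qed
  ultimately show ?thesis by simp
qed

lemma dens_bound:
  assumes "0 \<le> y" shows "y * std_normal_density y \<le> 1"
proof -
  have "1 + y\<^sup>2 / 2 \<le> exp (y\<^sup>2 / 2)" by (rule exp_ge_add_one_self)
  moreover have "y \<le> 1 + y\<^sup>2 / 2" using sum_power2_ge_zero[of "y - 1" 0]
    by (simp add: power2_eq_square algebra_simps)
  ultimately have 1: "y \<le> exp (y\<^sup>2 / 2)" by linarith
  have "y * exp (- y\<^sup>2 / 2) = y / exp (y\<^sup>2 / 2)" by (simp add: exp_minus field_simps)
  also have "\<dots> \<le> 1" using 1 by (simp add: divide_le_eq)
  finally have 2: "y * exp (- y\<^sup>2 / 2) \<le> 1" .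
  have 3: "1 / sqrt (2 * pi) \<le> 1" using pi_gt3 by (simp add: divide_le_eq real_le_rsqrt)
  have "y * std_normal_density y = (1 / sqrt (2 * pi)) * (y * exp (- y\<^sup>2 / 2))"
    unfolding std_normal_density_def by simp
  also have "\<dots> \<le> 1 * 1"
    using 2 3 assms by (intro mult_mono) auto
  finally show ?thesis by simp
qed

lemma ip_meas: "{g \<in> space gauss_measure. x \<le> ip_gauss c g} \<in> sets (gauss_measure :: ('v::finite \<Rightarrow> real) measure)"
  unfolding ip_gauss_def gauss_measure_def by measurable

lemma ip_add: "ip_gauss (c + d) g = ip_gauss c g + ip_gauss d g"
  by (simp add: ip_gauss_def sum.distrib algebra_simps)

lemma gsq_bounds:
  fixes g e :: real
  assumes "-1/3 - e \<le> g" "g \<le> -1/3 + e" "0 \<le> e" "e \<le> 1/3"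
  shows "g\<^sup>2 \<le> (1/3 + e)\<^sup>2" "(1/3 - e)\<^sup>2 \<le> g\<^sup>2"
proof -
  have "(-g)\<^sup>2 \<le> (1/3 + e)\<^sup>2" using assms by (intro power_mono) auto
  then show "g\<^sup>2 \<le> (1/3 + e)\<^sup>2" by simp
  have "(1/3 - e)\<^sup>2 \<le> (-g)\<^sup>2" using assms by (intro power_mono) auto
  then show "(1/3 - e)\<^sup>2 \<le> g\<^sup>2" by simp
qed

lemma alg:
  fixes ga gb gc e :: real
  assumes a: "-1/3 - e \<le> ga" "ga \<le> -1/3 + e"
    and b: "-1/3 - e \<le> gb" "gb \<le> -1/3 + e"
    and c: "-1/3 - e \<le> gc" "gc \<le> -1/3 + e"
    and e: "0 \<le> e" "e \<le> 1/10"
  shows "1 + (ga\<^sup>2 + gb\<^sup>2 - gc\<^sup>2 - 1) / (sqrt (1 - ga\<^sup>2) * sqrt (1 - gb\<^sup>2)) \<le> 3 * e"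
proof -
  have A: "ga\<^sup>2 \<le> (1/3 + e)\<^sup>2" "(1/3 - e)\<^sup>2 \<le> ga\<^sup>2" using gsq_bounds[OF a] e by auto
  have B: "gb\<^sup>2 \<le> (1/3 + e)\<^sup>2" "(1/3 - e)\<^sup>2 \<le> gb\<^sup>2" using gsq_bounds[OF b] e by auto
  have C: "gc\<^sup>2 \<le> (1/3 + e)\<^sup>2" "(1/3 - e)\<^sup>2 \<le> gc\<^sup>2" using gsq_bounds[OF c] e by auto
  have "(1/3 + e)\<^sup>2 \<le> (1/2)\<^sup>2" using e by (intro power_mono) auto
  then have h: "(1/3 + e)\<^sup>2 \<le> 1/2" by (simp add: power2_eq_square)
  define ra where "ra = sqrt (1 - ga\<^sup>2)"
  define rb where "rb = sqrt (1 - gb\<^sup>2)"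
  have ra2: "ra\<^sup>2 = 1 - ga\<^sup>2" "ra\<^sup>2 \<ge> 1/2" "ra \<ge> 0" using A h by (auto simp: ra_def)
  have rb2: "rb\<^sup>2 = 1 - gb\<^sup>2" "rb\<^sup>2 \<ge> 1/2" "rb \<ge> 0" using B h by (auto simp: rb_def)
  have "(1/2) * (1/2) \<le> (1 - ga\<^sup>2) * (1 - gb\<^sup>2)" using A B h by (intro mult_mono) auto
  then have "(1/2)\<^sup>2 \<le> (1 - ga\<^sup>2) * (1 - gb\<^sup>2)" by (simp add: power2_eq_square)
  then have "1/2 \<le> sqrt ((1 - ga\<^sup>2) * (1 - gb\<^sup>2))" by (rule real_le_rsqrt)
  then have p: "ra * rb \<ge> 1/2" by (simp add: ra_def rb_def real_sqrt_mult)
  have amgm: "ra * rb \<le> (ra\<^sup>2 + rb\<^sup>2) / 2" using sum_power2_ge_zero[of "ra - rb" 0]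
    by (simp add: power2_eq_square algebra_simps)
  have num: "ra * rb + (ga\<^sup>2 + gb\<^sup>2 - gc\<^sup>2 - 1) \<le> 4 * e / 3"
  proof -
    have "ra * rb + (ga\<^sup>2 + gb\<^sup>2 - gc\<^sup>2 - 1) \<le> (ga\<^sup>2 + gb\<^sup>2) / 2 - gc\<^sup>2"
    proof -
      have "ra * rb \<le> 1 - (ga\<^sup>2 + gb\<^sup>2) / 2" using amgm unfolding ra2(1) rb2(1) by argo
      then show ?thesis by argo
    qed
    also have "\<dots> \<le> (1/3 + e)\<^sup>2 - (1/3 - e)\<^sup>2" using A B C by argo
    also have "\<dots> = 4 * e / 3" by (simp add: power2_eq_square algebra_simps)
    finally show ?thesis .
  qed
  have "1 + (ga\<^sup>2 + gb\<^sup>2 - gc\<^sup>2 - 1) / (ra * rb) = (ra * rb + (ga\<^sup>2 + gb\<^sup>2 - gc\<^sup>2 - 1)) / (ra * rb)"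
  proof -
    have nz: "ra * rb \<noteq> 0" using p by auto
    show ?thesis using nz by (simp add: add_divide_distrib)
  qed
  also have "\<dots> \<le> 3 * e"
  proof -
    have "3 * e * (1/2) \<le> 3 * e * (ra * rb)" using p e by (intro mult_left_mono) auto
    then have "ra * rb + (ga\<^sup>2 + gb\<^sup>2 - gc\<^sup>2 - 1) \<le> 3 * e * (ra * rb)" using num e by argo
    then show ?thesis using p by (simp add: divide_le_eq)
  qed
  finally show ?thesis by (simp add: ra_def rb_def)
qed

lemma eps_bound:
  fixes n :: real assumes "n \<ge> 3"
  shows "3 * (1 / n ^ 100) \<le> 2 / n ^ 25" "1 / n ^ 100 \<le> 1/10"
proof -
  have "n ^ 1 \<le> n ^ 75" using assms by (intro power_increasing) auto
  then have n75: "n ^ 75 \<ge> 3" using assms by simp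
  have np: "n ^ 25 > 0" using assms by simp
  have "n ^ 100 = n ^ 25 * n ^ 75" by (simp flip: power_add)
  moreover have "n ^ 25 * 3 \<le> n ^ 25 * n ^ 75" using n75 np by (intro mult_left_mono) auto
  ultimately have "3 * n ^ 25 \<le> 2 * n ^ 100" using np by argo
  then show "3 * (1 / n ^ 100) \<le> 2 / n ^ 25" using np assms by (simp add: field_simps)
  have "(3::real) ^ 100 \<le> n ^ 100" using assms by (intro power_mono) auto
  moreover have "(10::real) \<le> 3 ^ 100" by simp
  ultimately have "10 \<le> n ^ 100" by linarith
  then show "1 / n ^ 100 \<le> 1/10" by (simp add: divide_simps)
qed

lemma inner_w:
  fixes x v0 :: "'a::real_inner"
  assumes "norm x = 1" "norm v0 = 1"
  shows "inner (x - inner x v0 *\<^sub>R v0) (x - inner x v0 *\<^sub>R v0) = 1 - (inner x v0)\<^sup>2"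
proof -
  have "inner x x = 1" "inner v0 v0 = 1" using assms by (simp_all flip: power2_norm_eq_inner)
  then show ?thesis by (simp add: inner_diff_left inner_diff_right inner_commute power2_eq_square algebra_simps)
qed

theorem lemma4p2:
  fixes E :: "'v::finite set set" and v :: "'v \<Rightarrow> real^'v" and v0 :: "real^'v"
    and t :: real and a b :: 'v
  assumes "\<forall>e\<in>E. card e = 3"
    and "sdp_feasible E v v0"
    and "\<forall>x. balanced (1 / real CARD('v) ^ 100) v v0 x"
    and "a \<noteq> b" and "\<exists>e\<in>E. a \<in> e \<and> b \<in> e"
  shows "measure gauss_measure {g \<in> space gauss_measure. a \<in> Sset v v0 t g \<and> b \<in> Sset v v0 t g}
           \<le> Phibar (2 * t) + 2 / real CARD('v) ^ 25"
proof -
  interpret prob_space "gauss_measure :: ('v \<Rightarrow> real) measure" by (rule gauss_prob_space)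
  define n where "n = real CARD('v)"
  define \<epsilon> where "\<epsilon> = 1 / n ^ 100"
  from assms(5) obtain e where eE: "e \<in> E" and ae: "a \<in> e" and be: "b \<in> e" by blast
  have c3: "card e = 3" using assms(1) eE by blast
  have fe: "finite e" by simp
  have "card (e - {a, b}) = card e - card {a, b}"
    using ae be by (intro card_Diff_subset) auto
  then have "card (e - {a, b}) = 1" using c3 assms(4) by simp
  then obtain c where ceq: "e - {a, b} = {c}" by (rule card_1_singletonE)
  then have eeq: "e = {a, b, c}" and ca: "c \<noteq> a" and cb: "c \<noteq> b" using ae be by auto
  have "card e \<le> CARD('v)" by (rule card_mono) auto
  then have n3: "n \<ge> 3" using c3 unfolding n_def by simp
  have eps: "3 * \<epsilon> \<le> 2 / n ^ 25" "\<epsilon> \<le> 1/10" "0 \<le> \<epsilon>"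
    using eps_bound[OF n3] n3 unfolding \<epsilon>_def by auto
  have nv0: "norm v0 = 1" and nv: "\<And>x. norm (v x) = 1" and esum: "(\<Sum>x\<in>e. v x) = - v0"
    using assms(2) eE unfolding sdp_feasible_def by auto
  have vsum: "v a + v b + v c = - v0"
    using esum unfolding eeq using assms(4) ca cb by (simp add: algebra_simps)
  define \<gamma> where "\<gamma> = gam v v0"
  have bal: "-1/3 - \<epsilon> \<le> \<gamma> x" "\<gamma> x \<le> -1/3 + \<epsilon>" for x
    using assms(3) unfolding balanced_def \<gamma>_def \<epsilon>_def n_def by auto
  have gsum: "\<gamma> a + \<gamma> b + \<gamma> c = -1"
  proof -
    have "inner (v a + v b + v c) v0 = inner (- v0) v0" using vsum by simp
    moreover have "inner v0 v0 = 1" using nv0 by (simp flip: power2_norm_eq_inner)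
    ultimately show ?thesis unfolding \<gamma>_def gam_def by (simp add: inner_add_left)
  qed
  define w where "w x = v x - \<gamma> x *\<^sub>R v0" for x
  define r where "r x = sqrt (1 - (\<gamma> x)\<^sup>2)" for x
  have ww: "inner (w x) (w x) = 1 - (\<gamma> x)\<^sup>2" for x
    unfolding w_def \<gamma>_def gam_def by (rule inner_w[OF nv nv0])
  have wsum: "w c = - (w a + w b)"
  proof -
    have "w a + w b + w c = (v a + v b + v c) - (\<gamma> a + \<gamma> b + \<gamma> c) *\<^sub>R v0"
      unfolding w_def by (simp add: algebra_simps)
    also have "\<dots> = 0" using vsum gsum by simp
    finally show ?thesis by (simp add: algebra_simps eq_neg_iff_add_eq_0)
  qed
  have wab: "2 * inner (w a) (w b) = (\<gamma> a)\<^sup>2 + (\<gamma> b)\<^sup>2 - (\<gamma> c)\<^sup>2 - 1"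
  proof -
    have "inner (w c) (w c) = inner (w a) (w a) + inner (w b) (w b) + 2 * inner (w a) (w b)"
      unfolding wsum by (simp add: inner_add_left inner_add_right inner_diff_left inner_diff_right inner_commute algebra_simps)
    then show ?thesis unfolding ww by simp
  qed
  have gsq: "(\<gamma> x)\<^sup>2 < 1" for x
  proof -
    have "(\<gamma> x)\<^sup>2 \<le> (1/3 + \<epsilon>)\<^sup>2" using gsq_bounds[OF bal[of x]] eps by auto
    also have "\<dots> \<le> (1/2)\<^sup>2" using eps by (intro power_mono) auto
    finally show ?thesis by (simp add: power2_eq_square)
  qed
  have rpos: "r x > 0" for x unfolding r_def using gsq[of x] by simp
  have r2: "(r x)\<^sup>2 = 1 - (\<gamma> x)\<^sup>2" for x unfolding r_def using gsq[of x] by simp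
  have ub: "ubar v v0 x = (1 / r x) *\<^sub>R w x" for x
    unfolding ubar_def r_def w_def \<gamma>_def ..
  have uu: "inner (ubar v v0 x) (ubar v v0 x) = 1" for x
    unfolding ub using rpos[of x] r2[of x] ww[of x] gsq[of x] by (simp add: power2_eq_square)
  have nu: "norm (ubar v v0 x) = 1" for x using uu[of x] by (simp add: norm_eq_sqrt_inner)
  define U where "U = ubar v v0 a + ubar v v0 b"
  have UU: "inner U U = 2 + ((\<gamma> a)\<^sup>2 + (\<gamma> b)\<^sup>2 - (\<gamma> c)\<^sup>2 - 1) / (r a * r b)"
  proof -
    have "inner U U = inner (ubar v v0 a) (ubar v v0 a) + inner (ubar v v0 b) (ubar v v0 b) + 2 * inner (ubar v v0 a) (ubar v v0 b)"
      unfolding U_def by (simp add: inner_add_left inner_add_right inner_commute)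
    also have "inner (ubar v v0 a) (ubar v v0 b) = inner (w a) (w b) / (r a * r b)"
      unfolding ub by simp
    finally show ?thesis using wab uu by (simp add: field_simps)
  qed
  have sig: "(norm U)\<^sup>2 - 1 \<le> 3 * \<epsilon>"
  proof -
    have "(norm U)\<^sup>2 - 1 = 1 + ((\<gamma> a)\<^sup>2 + (\<gamma> b)\<^sup>2 - (\<gamma> c)\<^sup>2 - 1) / (r a * r b)"
      using UU by (simp add: power2_norm_eq_inner)
    also have "\<dots> \<le> 3 * \<epsilon>" unfolding r_def
      by (rule alg) (use bal eps in auto)
    finally show ?thesis .
  qed
  let ?P = "{g \<in> space gauss_measure. a \<in> Sset v v0 t g \<and> b \<in> Sset v v0 t g}"
  have Pdef: "?P = {g \<in> space gauss_measure. t \<le> ip_gauss (ubar v v0 a) g \<and> t \<le> ip_gauss (ubar v v0 b) g}"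
    unfolding Sset_def by simp
  have rhs0: "0 \<le> 2 / n ^ 25" using n3 by simp
  show ?thesis
  proof (cases "t \<le> 0")
    case True
    have "measure gauss_measure ?P \<le> measure gauss_measure {g \<in> space gauss_measure. t \<le> ip_gauss (ubar v v0 a) g}"
      unfolding Pdef by (rule finite_measure_mono[OF _ ip_meas]) auto
    also have "\<dots> = Phibar t"
    proof -
      have "ubar v v0 a \<noteq> 0" using nu[of a] by auto
      then show ?thesis using gauss_prob[of "ubar v v0 a" t] nu[of a] by simp
    qed
    also have "\<dots> \<le> Phibar (2 * t)" using True by (intro Phibar_mono) auto
    finally show ?thesis using rhs0 unfolding n_def by linarith
  next
    case False
    then have tpos: "t > 0" by simp
    have "measure gauss_measure ?P \<le> measure gauss_measure {g \<in> space gauss_measure. 2 * t \<le> ip_gauss U g}"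
      unfolding Pdef U_def by (rule finite_measure_mono[OF _ ip_meas]) (auto simp: ip_add)
    also have "\<dots> \<le> Phibar (2 * t) + 2 / n ^ 25"
    proof (cases "U = 0")
      case True
      then have "{g \<in> space gauss_measure. 2 * t \<le> ip_gauss U g} = {}"
        using tpos by (auto simp: ip_gauss_def)
      then have "measure gauss_measure {g \<in> space gauss_measure. 2 * t \<le> ip_gauss U g} = 0" by (simp only: measure_empty)
      then show ?thesis using rhs0 Phibar_nonneg[of "2 * t"] by linarith
    next
      case Unz: False
      define \<sigma> where "\<sigma> = norm U"
      have spos: "\<sigma> > 0" using Unz unfolding \<sigma>_def by simp
      have "measure gauss_measure {g \<in> space gauss_measure. 2 * t \<le> ip_gauss U g} = Phibar (2 * t / \<sigma>)"
        unfolding \<sigma>_def by (rule gauss_prob[OF Unz])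
      also have "\<dots> \<le> Phibar (2 * t) + 2 / n ^ 25"
      proof (cases "\<sigma> \<le> 1")
        case True
        have "2 * t \<le> 2 * t / \<sigma>" using True spos tpos by (simp add: field_simps)
        then show ?thesis using rhs0 Phibar_mono by (smt (verit))
      next
        case False
        define y where "y = 2 * t / \<sigma>"
        have y0: "0 \<le> y" using spos tpos unfolding y_def by simp
        have yx: "y \<le> 2 * t" using False tpos unfolding y_def by (simp add: field_simps)
        have xy: "2 * t - y = (\<sigma> - 1) * y" unfolding y_def using spos by (simp add: field_simps)
        have "(2 * t - y) * std_normal_density y = (\<sigma> - 1) * (y * std_normal_density y)"
          unfolding xy by simp
        also have "\<dots> \<le> (\<sigma> - 1) * 1"
          using False dens_bound[OF y0] by (intro mult_left_mono) auto
        also have "\<dots> \<le> \<sigma>\<^sup>2 - 1" using False by (simp add: power2_eq_square)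
        also have "\<dots> \<le> 3 * \<epsilon>" using sig unfolding \<sigma>_def .
        also have "\<dots> \<le> 2 / n ^ 25" by (rule eps(1))
        finally have "(2 * t - y) * std_normal_density y \<le> 2 / n ^ 25" .
        then show ?thesis using Phibar_gap[OF y0 yx] unfolding y_def by linarith
      qed
      finally show ?thesis .
    qed
    finally show ?thesis unfolding n_def by simp
  qed
qed

end
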